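(* Let $G$ be a finite connected graph with chromatic number $\chi$. Then either $G$ admits a proper $\chi$-coloring $c$ such that the oriented graph $D_c$ contains an oriented cycle, or for every vertex $v$ of $G$ there exists a nice $\chi$-coloring $c$ of $G$ such that $v$ is the unique sink of $D_c$.
   Context: A proper $\chi$-coloring is a map $c:V(G)\to\{1,\dots,\chi\}$ with adjacent vertices receiving different colors; colors are considered modulo $\chi$. For such a coloring $c$, $D_c$ is the oriented graph with vertex set $V(G)$ in which $ab$ is an arc if and only if $\{a,b\}$ is an edge of $G$ and $c(b)\equiv c(a)+1 \pmod{\chi}$. A sink is a vertex with no out-going arc. A proper $\chi$-coloring $c$ is called nice if $D_c$ is acyclic (contains no oriented cycle) and has exactly one sink. *)

theory Defs
  imports Main
begin

definition finite_graph :: "'a set \<Rightarrow> ('a \<Rightarrow> 'a \<Rightarrow> bool) \<Rightarrow> bool" where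
  "finite_graph V E \<longleftrightarrow> finite V \<and> (\<forall>a b. E a b \<longrightarrow> a \<in> V \<and> b \<in> V)
     \<and> (\<forall>a b. E a b \<longrightarrow> E b a) \<and> (\<forall>a. \<not> E a a)"

definition connected_graph :: "'a set \<Rightarrow> ('a \<Rightarrow> 'a \<Rightarrow> bool) \<Rightarrow> bool" where
  "connected_graph V E \<longleftrightarrow> V \<noteq> {} \<and>
     (\<forall>a\<in>V. \<forall>b\<in>V. (a, b) \<in> {(x, y). E x y}\<^sup>*)"

definition proper_coloring :: "'a set \<Rightarrow> ('a \<Rightarrow> 'a \<Rightarrow> bool) \<Rightarrow> nat \<Rightarrow> ('a \<Rightarrow> nat) \<Rightarrow> bool" where
  "proper_coloring V E k c \<longleftrightarrow> (\<forall>v\<in>V. c v \<in> {1..k}) \<and> (\<forall>a b. E a b \<longrightarrow> c a \<noteq> c b)"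

definition chromatic_number :: "'a set \<Rightarrow> ('a \<Rightarrow> 'a \<Rightarrow> bool) \<Rightarrow> nat" where
  "chromatic_number V E = (LEAST k. \<exists>c. proper_coloring V E k c)"

definition arcs :: "('a \<Rightarrow> 'a \<Rightarrow> bool) \<Rightarrow> nat \<Rightarrow> ('a \<Rightarrow> nat) \<Rightarrow> ('a \<times> 'a) set" where
  "arcs E k c = {(a, b). E a b \<and> c b mod k = (c a + 1) mod k}"

definition is_sink :: "('a \<Rightarrow> 'a \<Rightarrow> bool) \<Rightarrow> nat \<Rightarrow> ('a \<Rightarrow> nat) \<Rightarrow> 'a \<Rightarrow> bool" where
  "is_sink E k c v \<longleftrightarrow> (\<forall>w. (v, w) \<notin> arcs E k c)"

definition nice_coloring :: "'a set \<Rightarrow> ('a \<Rightarrow> 'a \<Rightarrow> bool) \<Rightarrow> nat \<Rightarrow> ('a \<Rightarrow> nat) \<Rightarrow> bool" where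
  "nice_coloring V E k c \<longleftrightarrow> proper_coloring V E k c \<and> acyclic (arcs E k c)
     \<and> (\<exists>!v. v \<in> V \<and> is_sink E k c v)"

end

theory Submission
  imports Defs
begin

lemma sink_exists:
  assumes "finite V" "V \<noteq> {}" "r \<subseteq> V \<times> V" "acyclic r"
  shows "\<exists>z\<in>V. \<forall>y. (z, y) \<notin> r"
proof -
  have "finite (r\<inverse>)" using assms(1,3) finite_subset[of r "V \<times> V"] by auto
  moreover have "acyclic (r\<inverse>)" using assms(4) by (simp add: acyclic_converse)
  ultimately have wf: "wf (r\<inverse>)" by (rule finite_acyclic_wf)
  obtain x where "x \<in> V" using assms(2) by blast
  from wfE_min[OF wf this] obtain z where z: "z \<in> V" "\<And>y. (y, z) \<in> r\<inverse> \<Longrightarrow> y \<notin> V" by blast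
  show ?thesis using z assms(3) by blast
qed

lemma path_bound:
  assumes "(x, y) \<in> {(a, b). E a b} ^^ n"
    and "\<forall>a b. E a b \<longrightarrow> (h a :: nat) < h b + k"
  shows "h x \<le> h y + k * n"
  using assms(1)
proof (induction n arbitrary: y)
  case 0
  then show ?case by simp
next
  case (Suc n)
  then obtain z where "(x, z) \<in> {(a, b). E a b} ^^ n" "E z y" by auto
  with Suc.IH assms(2) have "h x \<le> h z + k * n" "h z < h y + k" by auto
  then show ?case by simp
qed

lemma mod_suc_iff:
  fixes a b k :: nat
  shows "((a mod k + 1) mod k = (b mod k + 1 + 1) mod k) \<longleftrightarrow> (a mod k = (b + 1) mod k)"
proof -
  have "(a mod k + 1) mod k = (a + 1) mod k" by (metis mod_add_left_eq)
  moreover have "(b mod k + 1 + 1) mod k = ((b + 1) + 1) mod k" by (metis add.assoc mod_add_left_eq)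
  moreover have "((a + 1) mod k = ((b+1) + 1) mod k) \<longleftrightarrow> (a mod k = (b+1) mod k)"
    by (simp add: nat_mod_eq_iff)
  ultimately show ?thesis by simp
qed

theorem corollary5:
  fixes V :: "'a set" and E :: "'a \<Rightarrow> 'a \<Rightarrow> bool"
  assumes "finite_graph V E" and "connected_graph V E"
  shows "(\<exists>c. proper_coloring V E (chromatic_number V E) c
              \<and> \<not> acyclic (arcs E (chromatic_number V E) c))
       \<or> (\<forall>v\<in>V. \<exists>c. nice_coloring V E (chromatic_number V E) c
              \<and> is_sink E (chromatic_number V E) c v)"
proof (cases "\<exists>c. proper_coloring V E (chromatic_number V E) c
              \<and> \<not> acyclic (arcs E (chromatic_number V E) c)")
  case True
  then show ?thesis by blast
next
  case False
  define k where "k = chromatic_number V E"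
  have acyc: "\<And>c. proper_coloring V E k c \<Longrightarrow> acyclic (arcs E k c)"
    using False k_def by blast
  have fin: "finite V" and Ein: "\<And>a b. E a b \<Longrightarrow> a \<in> V \<and> b \<in> V"
    and sym: "\<And>a b. E a b \<Longrightarrow> E b a" and irr: "\<And>a. \<not> E a a"
    using assms(1) unfolding finite_graph_def by auto
  have ne: "V \<noteq> {}" and conn: "\<And>a b. a \<in> V \<Longrightarrow> b \<in> V \<Longrightarrow> (a, b) \<in> {(x, y). E x y}\<^sup>*"
    using assms(2) unfolding connected_graph_def by auto
  have "\<exists>c. proper_coloring V E (card V) c"
  proof -
    obtain f where f: "bij_betw f V {0..<card V}"
      using fin ex_bij_betw_finite_nat by blast
    define c where "c x = f x + 1" for x
    have "proper_coloring V E (card V) c"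
      unfolding proper_coloring_def
    proof safe
      fix v assume "v \<in> V"
      then have "f v < card V" using f bij_betwE by fastforce
      then show "c v \<in> {1..card V}" by (simp add: c_def)
    next
      fix a b assume "E a b" "c a = c b"
      then have "f a = f b" "a \<in> V" "b \<in> V" using Ein by (auto simp: c_def)
      then have "a = b" using f unfolding bij_betw_def inj_on_def by blast
      then show False using irr \<open>E a b\<close> by simp
    qed
    then show ?thesis by blast
  qed
  then have "\<exists>c. proper_coloring V E k c"
    unfolding k_def chromatic_number_def using LeastI_ex[of "\<lambda>k. \<exists>c. proper_coloring V E k c"] by blast
  then obtain c0 where c0: "proper_coloring V E k c0" by blast
  have kpos: "k \<ge> 1"
  proof -
    obtain x where "x \<in> V" using ne by blast
    then have "c0 x \<in> {1..k}" using c0 unfolding proper_coloring_def by blast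
    then show ?thesis by simp
  qed
  show ?thesis
    unfolding k_def[symmetric]
  proof (intro disjI2 ballI)
    fix v assume vV: "v \<in> V"
    define h0 where "h0 x = c0 x - 1" for x
    define H where "H = {h :: 'a \<Rightarrow> nat. (\<forall>a b. E a b \<longrightarrow> h a mod k \<noteq> h b mod k \<and> h a < h b + k) \<and> h v = h0 v}"
    have h0H: "h0 \<in> H"
      unfolding H_def
    proof safe
      fix a b assume "E a b"
      then have "a \<in> V" "b \<in> V" "c0 a \<noteq> c0 b" using Ein c0 unfolding proper_coloring_def by auto
      then have "c0 a \<in> {1..k}" "c0 b \<in> {1..k}" using c0 unfolding proper_coloring_def by auto
      then show "h0 a mod k = h0 b mod k \<Longrightarrow> False" "h0 a < h0 b + k"
        using \<open>c0 a \<noteq> c0 b\<close> by (auto simp: h0_def)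
    qed
    have "\<forall>x\<in>V. \<exists>n. (x, v) \<in> {(a, b). E a b} ^^ n"
      using conn vV by (simp add: rtrancl_power)
    then obtain nn where nn: "\<And>x. x \<in> V \<Longrightarrow> (x, v) \<in> {(a, b). E a b} ^^ nn x" by metis
    define B where "B = (\<Sum>x\<in>V. h0 v + k * nn x)"
    have bound: "\<forall>h. h \<in> H \<longrightarrow> (\<Sum>x\<in>V. h x) < B + 1"
    proof (intro allI impI)
      fix h assume "h \<in> H"
      then have e: "\<forall>a b. E a b \<longrightarrow> h a < h b + k" and hv: "h v = h0 v" unfolding H_def by auto
      have "\<And>x. x \<in> V \<Longrightarrow> h x \<le> h0 v + k * nn x"
        using path_bound[OF nn e] hv by metis
      then have "(\<Sum>x\<in>V. h x) \<le> B" unfolding B_def by (rule sum_mono)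
      then show "(\<Sum>x\<in>V. h x) < B + 1" by simp
    qed
    obtain h where hH: "h \<in> H" and hmax: "\<And>g. g \<in> H \<Longrightarrow> (\<Sum>x\<in>V. g x) \<le> (\<Sum>x\<in>V. h x)"
      using ex_has_greatest_nat[of "\<lambda>h. h \<in> H" h0 "\<lambda>h. \<Sum>x\<in>V. h x" "B + 1"] h0H bound by blast
    have hE: "\<And>a b. E a b \<Longrightarrow> h a mod k \<noteq> h b mod k \<and> h a < h b + k" and hv: "h v = h0 v"
      using hH unfolding H_def by auto
    define c where "c x = h x mod k + 1" for x
    have proper: "proper_coloring V E k c"
      unfolding proper_coloring_def c_def using hE kpos by (auto simp: Suc_le_eq)
    have sink_iff: "\<And>w. is_sink E k c w \<longleftrightarrow> (\<forall>u. E w u \<longrightarrow> h u mod k \<noteq> (h w + 1) mod k)"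
      unfolding is_sink_def arcs_def c_def using mod_suc_iff by auto
    have only_v: "\<And>w. w \<in> V \<Longrightarrow> is_sink E k c w \<Longrightarrow> w = v"
    proof (rule ccontr)
      fix w assume wV: "w \<in> V" and sk: "is_sink E k c w" and wv: "w \<noteq> v"
      have sk': "\<And>u. E w u \<Longrightarrow> h u mod k \<noteq> (h w + 1) mod k" using sk sink_iff by blast
      define g where "g = h(w := h w + 1)"
      have gv: "g v = h0 v" using wv hv by (simp add: g_def)
      have "\<forall>a b. E a b \<longrightarrow> g a mod k \<noteq> g b mod k \<and> g a < g b + k"
      proof (intro allI impI)
        fix a b assume ab: "E a b"
        have "a \<noteq> b" using ab irr by blast
        show "g a mod k \<noteq> g b mod k \<and> g a < g b + k"
        proof (cases "a = w")
          case True
          then have "b \<noteq> w" using \<open>a \<noteq> b\<close> by simp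
          have m: "h b mod k \<noteq> (h w + 1) mod k" using sk' ab True by blast
          have "h w < h b + k" using hE ab True by blast
          moreover have "h w + 1 \<noteq> h b + k" using m by (metis mod_add_self2)
          ultimately show ?thesis using m True \<open>b \<noteq> w\<close> by (simp add: g_def)
        next
          case False
          show ?thesis
          proof (cases "b = w")
            case True
            have m: "h a mod k \<noteq> (h w + 1) mod k" using sk' sym[OF ab] True by blast
            have "h a < h w + k" using hE ab True by blast
            then show ?thesis using m True False by (simp add: g_def)
          next
            case False2: False
            then show ?thesis using hE ab False by (simp add: g_def)
          qed
        qed
      qed
      then have "g \<in> H" using gv unfolding H_def by blast
      then have le: "(\<Sum>x\<in>V. g x) \<le> (\<Sum>x\<in>V. h x)" by (rule hmax)
      have "(\<Sum>x\<in>V. g x) = (\<Sum>x\<in>V. h x) + 1"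
      proof -
        have 1: "(\<Sum>x\<in>V. g x) = g w + (\<Sum>x\<in>V - {w}. g x)" by (rule sum.remove[OF fin wV])
        have 2: "(\<Sum>x\<in>V - {w}. g x) = (\<Sum>x\<in>V - {w}. h x)" by (rule sum.cong) (auto simp: g_def)
        have 3: "(\<Sum>x\<in>V. h x) = h w + (\<Sum>x\<in>V - {w}. h x)" by (rule sum.remove[OF fin wV])
        show ?thesis using 1 2 3 by (simp add: g_def)
      qed
      then show False using le by simp
    qed
    have ac: "acyclic (arcs E k c)" using acyc proper by blast
    have sub: "arcs E k c \<subseteq> V \<times> V" unfolding arcs_def using Ein by auto
    obtain z where zV: "z \<in> V" and zs: "\<forall>y. (z, y) \<notin> arcs E k c"
      using sink_exists[OF fin ne sub ac] by blast
    have "is_sink E k c z" using zs unfolding is_sink_def by blast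
    then have "z = v" using only_v zV by blast
    then have vs: "is_sink E k c v" using \<open>is_sink E k c z\<close> by simp
    have "nice_coloring V E k c"
      unfolding nice_coloring_def using proper ac vs vV only_v by blast
    then show "\<exists>c. nice_coloring V E k c \<and> is_sink E k c v" using vs by blast
  qed
qed

end
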